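(* Suppose Assumption A holds and Assumption B holds with $p=3$. Let $\{(x^k,m^k)\}_{k\ge0}$ be generated by Algorithm 1 with $q=2$, step sizes $\{\eta_k\}_{k\ge0}$, and parameters $\{(\gamma_{k,t},\theta_{k,t})\}_{1\le t\le2,k\ge0}$ satisfying, for all $k\ge0$, \[ \frac{\theta_{k,1}}{\gamma_{k,1}}+\frac{\theta_{k,2}}{\gamma_{k,2}}=1,\qquad \frac{\theta_{k,1}}{\gamma_{k,1}^2}+\frac{\theta_{k,2}}{\gamma_{k,2}^2}=1,\qquad \theta_{k,1}+\theta_{k,2}\in(0,1). \] Then for all $k\ge0$, \[ \mathbb{E}_{\xi^{k+1}}[\|m^{k+1}-\nabla f(x^{k+1})\|^2]\le(1-\theta_{k,1}-\theta_{k,2})\|m^k-\nabla f(x^k)\|^2+\frac{L_3^2\eta_k^6\theta_{k,1}^2}{12\gamma_{k,1}^6(\theta_{k,1}+\theta_{k,2})}+\frac{L_3^2\eta_k^6\theta_{k,2}^2}{12\gamma_{k,2}^6(\theta_{k,1}+\theta_{k,2})}+\frac{L_3^2\eta_k^6}{12(\theta_{k,1}+\theta_{k,2})}+2(\theta_{k,1}^2+\theta_{k,2}^2)\sigma^2 . \]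
   Context: Problem: minimize $f:\mathbb{R}^n\to\mathbb{R}$, where only a stochastic gradient estimator $G(\cdot;\xi)$ is accessible, $\xi$ being a random variable with sample space $\Xi$. $\|\cdot\|$ is the Euclidean norm. Assumption A: (a) there is a finite $f_{\mathrm{low}}$ with $f(x)\ge f_{\mathrm{low}}$ for all $x$; (b) there is $L_1>0$ with $\|\nabla f(y)-\nabla f(x)\|\le L_1\|y-x\|$ for all $x,y$; (c) $\mathbb{E}_\xi[G(x;\xi)]=\nabla f(x)$ and $\mathbb{E}_\xi[\|G(x;\xi)-\nabla f(x)\|^2]\le\sigma^2$ for all $x$, for some $\sigma>0$. Assumption B: $f$ is $p$ times continuously differentiable for some $p\ge2$ and there is $L_p>0$ with $\|D^pf(y)-D^pf(x)\|_{(p)}\le L_p\|y-x\|$ for all $x,y$, where $D^pf(x)$ is the $p$th derivative as a symmetric $p$-linear form and $\|\mathcal{T}\|_{(p)}=\max\{\mathcal{T}[h_1,\dots,h_p]:\|h_i\|\le 1\}$. Algorithm 1 (SFOM with multi-extrapolated momentum): inputs $x^0\in\mathbb{R}^n$, step sizes $\eta_k>0$, an integer $q\ge1$, extrapolation parameters $\gamma_{k,t}\in(0,1)$ and weighting parameters $\theta_{k,t}\in\mathbb{R}$ ($1\le t\le q$, $k\ge0$) with $\sum_{t=1}^q\theta_{k,t}\in(0,1)$ for all $k\ge0$. Initialize $x^{-1}=x^0$, $m^{-1}=0$, $(\gamma_{-1,t},\theta_{-1,t})=(1,1/q)$ for all $t$. For $k=0,1,2,\dots$: $z^{k,t}=x^k+\frac{1-\gamma_{k-1,t}}{\gamma_{k-1,t}}(x^k-x^{k-1})$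 for $1\le t\le q$; $m^k=(1-\sum_{t=1}^q\theta_{k-1,t})m^{k-1}+\sum_{t=1}^q\theta_{k-1,t}G(z^{k,t};\xi^k)$; $x^{k+1}=x^k-\eta_k m^k/\|m^k\|$. Here $\xi^0,\xi^1,\dots$ are independent samples of $\xi$ (and $m^k\neq0$ is implicitly assumed). $\mathbb{E}_{\xi^{k+1}}[\cdot]$ denotes expectation with respect to $\xi^{k+1}$ conditional on $\xi^0,\dots,\xi^k$. *)

theory Defs
  imports "HOL-Probability.Probability"
begin

text \<open>The state at iteration k is
(x^k, x^{k-1}, m^k).  The parameters gamma k t, theta k t stand for gamma_{k,t}, theta_{k,t}
for k >= 0; the initial values gamma_{-1,t} = 1, theta_{-1,t} = 1/q are hard-coded in the
case k = 0.  xi k is the sample xi^k.\<close>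

fun sfom_state ::
  "('a::real_normed_vector \<Rightarrow> 'b \<Rightarrow> 'a) \<Rightarrow> 'a \<Rightarrow> (nat \<Rightarrow> real) \<Rightarrow> nat \<Rightarrow>
   (nat \<Rightarrow> nat \<Rightarrow> real) \<Rightarrow> (nat \<Rightarrow> nat \<Rightarrow> real) \<Rightarrow> (nat \<Rightarrow> 'b) \<Rightarrow> nat \<Rightarrow> 'a \<times> 'a \<times> 'a"
where
  "sfom_state G x0 eta q gamma theta xi 0 =
     (let z = (\<lambda>t. x0 + ((1 - 1) / 1) *\<^sub>R (x0 - x0));
          m0 = (1 - (\<Sum>t\<in>{1..q}. 1 / real q)) *\<^sub>R 0
               + (\<Sum>t\<in>{1..q}. (1 / real q) *\<^sub>R G (z t) (xi 0))
      in (x0, x0, m0))"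
| "sfom_state G x0 eta q gamma theta xi (Suc k) =
     (let (xk, xkm1, mk) = sfom_state G x0 eta q gamma theta xi k;
          xk1 = xk - (eta k / norm mk) *\<^sub>R mk;
          z = (\<lambda>t. xk1 + ((1 - gamma k t) / gamma k t) *\<^sub>R (xk1 - xk));
          mk1 = (1 - (\<Sum>t\<in>{1..q}. theta k t)) *\<^sub>R mk
                + (\<Sum>t\<in>{1..q}. theta k t *\<^sub>R G (z t) (xi (Suc k)))
      in (xk1, xk, mk1))"

definition sfom_x where
  "sfom_x G x0 eta q gamma theta xi k = fst (sfom_state G x0 eta q gamma theta xi k)"

definition sfom_m where
  "sfom_m G x0 eta q gamma theta xi k = snd (snd (sfom_state G x0 eta q gamma theta xi k))"

end

theory Submission imports Defs begin

lemma taylor2_pos: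
  fixes \<phi> \<phi>1 \<phi>2 :: "real \<Rightarrow> real"
  assumes d0: "\<And>t. (\<phi> has_real_derivative \<phi>1 t) (at t)"
    and d1: "\<And>t. (\<phi>1 has_real_derivative \<phi>2 t) (at t)"
    and lip: "\<And>t. t \<ge> 0 \<Longrightarrow> \<bar>\<phi>2 t - \<phi>2 0\<bar> \<le> L * t"
    and t: "t \<ge> 0"
  shows "\<bar>\<phi> t - \<phi> 0 - t * \<phi>1 0 - t^2/2 * \<phi>2 0\<bar> \<le> L * t^3/6"
proof -
  have g1: "\<bar>\<phi>1 s - \<phi>1 0 - s * \<phi>2 0\<bar> \<le> L * s^2/2" if s: "s \<ge> 0" for s
  proof -
    have "(\<lambda>x. L*x^2/2 - (\<phi>1 x - \<phi>1 0 - x*\<phi>2 0)) 0 \<le> (\<lambda>x. L*x^2/2 - (\<phi>1 x - \<phi>1 0 - x*\<phi>2 0)) s"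
    proof (rule DERIV_nonneg_imp_nondecreasing[OF s])
      fix x assume x: "0 \<le> x" "x \<le> s"
      show "\<exists>y. DERIV (\<lambda>x. L*x^2/2 - (\<phi>1 x - \<phi>1 0 - x*\<phi>2 0)) x :> y \<and> y \<ge> 0"
        apply (rule exI[of _ "L*x - (\<phi>2 x - \<phi>2 0)"])
        apply (intro conjI)
         apply (rule derivative_eq_intros d1 refl | simp)+
        using lip[OF x(1)] by auto
    qed
    moreover have "(\<lambda>x. L*x^2/2 + (\<phi>1 x - \<phi>1 0 - x*\<phi>2 0)) 0 \<le> (\<lambda>x. L*x^2/2 + (\<phi>1 x - \<phi>1 0 - x*\<phi>2 0)) s"
    proof (rule DERIV_nonneg_imp_nondecreasing[OF s])
      fix x assume x: "0 \<le> x" "x \<le> s"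
      show "\<exists>y. DERIV (\<lambda>x. L*x^2/2 + (\<phi>1 x - \<phi>1 0 - x*\<phi>2 0)) x :> y \<and> y \<ge> 0"
        apply (rule exI[of _ "L*x + (\<phi>2 x - \<phi>2 0)"])
        apply (intro conjI)
         apply (rule derivative_eq_intros d1 refl | simp)+
        using lip[OF x(1)] by auto
    qed
    ultimately show ?thesis by (subst abs_le_iff) simp
  qed
  have "(\<lambda>x. L*x^3/6 - (\<phi> x - \<phi> 0 - x * \<phi>1 0 - x^2/2 * \<phi>2 0)) 0 \<le> (\<lambda>x. L*x^3/6 - (\<phi> x - \<phi> 0 - x * \<phi>1 0 - x^2/2 * \<phi>2 0)) t"
  proof (rule DERIV_nonneg_imp_nondecreasing[OF t])
    fix x assume x: "0 \<le> x" "x \<le> t"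
    show "\<exists>y. DERIV (\<lambda>x. L*x^3/6 - (\<phi> x - \<phi> 0 - x * \<phi>1 0 - x^2/2 * \<phi>2 0)) x :> y \<and> y \<ge> 0"
      apply (rule exI[of _ "L*x^2/2 - (\<phi>1 x - \<phi>1 0 - x*\<phi>2 0)"])
      apply (intro conjI)
       apply (rule derivative_eq_intros d0 refl | simp)+
       apply (simp add: field_simps power2_eq_square power3_eq_cube)
      using g1[OF x(1)] unfolding abs_le_iff by (simp add: power2_eq_square)
  qed
  moreover have "(\<lambda>x. L*x^3/6 + (\<phi> x - \<phi> 0 - x * \<phi>1 0 - x^2/2 * \<phi>2 0)) 0 \<le> (\<lambda>x. L*x^3/6 + (\<phi> x - \<phi> 0 - x * \<phi>1 0 - x^2/2 * \<phi>2 0)) t"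
  proof (rule DERIV_nonneg_imp_nondecreasing[OF t])
    fix x assume x: "0 \<le> x" "x \<le> t"
    show "\<exists>y. DERIV (\<lambda>x. L*x^3/6 + (\<phi> x - \<phi> 0 - x * \<phi>1 0 - x^2/2 * \<phi>2 0)) x :> y \<and> y \<ge> 0"
      apply (rule exI[of _ "L*x^2/2 + (\<phi>1 x - \<phi>1 0 - x*\<phi>2 0)"])
      apply (intro conjI)
       apply (rule derivative_eq_intros d0 refl | simp)+
       apply (simp add: field_simps power2_eq_square power3_eq_cube)
      using g1[OF x(1)] unfolding abs_le_iff by (simp add: power2_eq_square)
  qed
  ultimately show ?thesis by (subst abs_le_iff) (simp add: field_simps)
qed

lemma taylor2:
  fixes \<phi> \<phi>1 \<phi>2 :: "real \<Rightarrow> real"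
  assumes d0: "\<And>t. (\<phi> has_real_derivative \<phi>1 t) (at t)"
    and d1: "\<And>t. (\<phi>1 has_real_derivative \<phi>2 t) (at t)"
    and lip: "\<And>t. \<bar>\<phi>2 t - \<phi>2 0\<bar> \<le> L * \<bar>t\<bar>"
  shows "\<bar>\<phi> t - \<phi> 0 - t * \<phi>1 0 - t^2/2 * \<phi>2 0\<bar> \<le> L * \<bar>t\<bar>^3/6"
proof (cases "t \<ge> 0")
  case True
  have "\<bar>\<phi> t - \<phi> 0 - t * \<phi>1 0 - t^2/2 * \<phi>2 0\<bar> \<le> L * t^3/6"
    by (rule taylor2_pos[OF d0 d1]) (use lip[of t] True in \<open>auto intro: order.trans[OF lip]\<close>)
  then show ?thesis using True by simp
next
  case False
  have e0: "((\<lambda>x. \<phi> (-x)) has_real_derivative (\<lambda>x. - \<phi>1 (-x)) s) (at s)" for s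
    using DERIV_chain2[where f=\<phi> and g=uminus and x=s and Da="\<phi>1 (-s)", OF d0[of "-s"] DERIV_minus[OF DERIV_ident[where F="at s"]]] by simp
  have e1: "((\<lambda>x. - \<phi>1 (-x)) has_real_derivative (\<lambda>x. \<phi>2 (-x)) s) (at s)" for s
    using DERIV_minus[OF DERIV_chain2[where f=\<phi>1 and g=uminus and x=s and Da="\<phi>2 (-s)", OF d1[of "-s"] DERIV_minus[OF DERIV_ident[where F="at s"]]]] by simp
  have "\<bar>\<phi> (-(-t)) - \<phi> (-0) - (-t) * (- \<phi>1 (-0)) - (-t)^2/2 * \<phi>2 (-0)\<bar> \<le> L * (-t)^3/6"
    by (rule taylor2_pos[OF e0 e1, of L "-t"]) (use False in \<open>auto intro: order.trans[OF lip]\<close>)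
  then show ?thesis using False by simp
qed

lemma phi_deriv:
  fixes g :: "'a::real_normed_vector \<Rightarrow> real"
  assumes "\<And>x. (g has_derivative g' x) (at x)"
  shows "((\<lambda>t. g (y + t *\<^sub>R u)) has_real_derivative g' (y + t *\<^sub>R u) u) (at t)"
proof -
  have l: "((\<lambda>t. y + t *\<^sub>R u) has_derivative (\<lambda>h. h *\<^sub>R u)) (at t)"
    by (rule derivative_eq_intros refl | simp)+
  have c: "((g \<circ> (\<lambda>t. y + t *\<^sub>R u)) has_derivative (g' (y + t *\<^sub>R u) \<circ> (\<lambda>h. h *\<^sub>R u))) (at t)"
    by (rule diff_chain_at[OF l assms])
  have lin: "linear (g' (y + t *\<^sub>R u))" using has_derivative_linear[OF assms] .
  have "(g' (y + t *\<^sub>R u) \<circ> (\<lambda>h. h *\<^sub>R u)) = (*) (g' (y + t *\<^sub>R u) u)"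
    using linear_scale[OF lin] by (auto simp: fun_eq_iff)
  then show ?thesis using c unfolding has_field_derivative_def o_def by simp
qed

lemma state_indep:
  "n > k \<Longrightarrow> sfom_state G x0 eta q gamma theta (xi(n := s)) k = sfom_state G x0 eta q gamma theta xi k"
  by (induction k) (auto simp: Let_def split: prod.splits)

lemma sq3: "(a+b+d)^2 \<le> 3*(a^2+b^2+d^2)" for a b d :: real
proof -
  have "3*(a^2+b^2+d^2) - (a+b+d)^2 = (a-b)^2+(b-d)^2+(a-d)^2" by (simp add: power2_eq_square algebra_simps)
  moreover have "(a-b)^2+(b-d)^2+(a-d)^2 \<ge> 0" by simp
  ultimately show ?thesis by linarith
qed
lemma sqh: "g > 0 \<Longrightarrow> (L * e^3/6 * (\<bar>t\<bar>/g^3))^2 = L^2*e^6*t^2/(36*g^6)" for L e t g :: real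
  by (simp add: power_mult_distrib power_divide power2_abs field_simps flip: power_mult)

theorem lemma3p2:
  fixes f :: "'a::euclidean_space \<Rightarrow> real"
    and gradf :: "'a \<Rightarrow> 'a"
    and D2f :: "'a \<Rightarrow> 'a \<Rightarrow> 'a \<Rightarrow> real"
    and D3f :: "'a \<Rightarrow> 'a \<Rightarrow> 'a \<Rightarrow> 'a \<Rightarrow> real"
    and G :: "'a \<Rightarrow> 'b \<Rightarrow> 'a"
    and M :: "'b measure"
    and f_low L1 L3 \<sigma> :: real
    and x0 :: 'a
    and eta :: "nat \<Rightarrow> real"
    and gamma theta :: "nat \<Rightarrow> nat \<Rightarrow> real"
    and xis :: "nat \<Rightarrow> 'b"
    and k :: nat
  assumes prob: "prob_space M"
    and A_low: "\<And>x. f x \<ge> f_low"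
    and A_grad: "\<And>x. (f has_derivative (\<lambda>h. gradf x \<bullet> h)) (at x)"
    and A_L1: "L1 > 0" and A_lip: "\<And>x y. norm (gradf y - gradf x) \<le> L1 * norm (y - x)"
    and A_sigma: "\<sigma> > 0"
    and A_unbiased: "\<And>x. integrable M (\<lambda>s. G x s) \<and> (\<integral>s. G x s \<partial>M) = gradf x"
    and A_var: "\<And>x. integrable M (\<lambda>s. (norm (G x s - gradf x))\<^sup>2)
                     \<and> (\<integral>s. (norm (G x s - gradf x))\<^sup>2 \<partial>M) \<le> \<sigma>\<^sup>2"
    and B_D2: "\<And>x h1. ((\<lambda>y. gradf y \<bullet> h1) has_derivative D2f x h1) (at x)"
    and B_D3: "\<And>x h1 h2. ((\<lambda>y. D2f y h1 h2) has_derivative D3f x h1 h2) (at x)"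
    and B_L3: "L3 > 0"
    and B_lip: "\<And>x y h1 h2 h3. norm h1 \<le> 1 \<Longrightarrow> norm h2 \<le> 1 \<Longrightarrow> norm h3 \<le> 1 \<Longrightarrow>
                  D3f y h1 h2 h3 - D3f x h1 h2 h3 \<le> L3 * norm (y - x)"
    and eta_pos: "\<And>j. eta j > 0"
    and gamma_range: "\<And>j t. t \<in> {1, 2} \<Longrightarrow> 0 < gamma j t \<and> gamma j t < 1"
    and par1: "\<And>j. theta j 1 / gamma j 1 + theta j 2 / gamma j 2 = 1"
    and par2: "\<And>j. theta j 1 / (gamma j 1)\<^sup>2 + theta j 2 / (gamma j 2)\<^sup>2 = 1"
    and par3: "\<And>j. 0 < theta j 1 + theta j 2 \<and> theta j 1 + theta j 2 < 1"
    and m_nonzero: "sfom_m G x0 eta 2 gamma theta xis k \<noteq> 0"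
  shows "(\<integral>s. (norm (sfom_m G x0 eta 2 gamma theta (xis(Suc k := s)) (Suc k)
                     - gradf (sfom_x G x0 eta 2 gamma theta (xis(Suc k := s)) (Suc k))))\<^sup>2 \<partial>M)
         \<le> (1 - theta k 1 - theta k 2)
              * (norm (sfom_m G x0 eta 2 gamma theta xis k - gradf (sfom_x G x0 eta 2 gamma theta xis k)))\<^sup>2
           + L3\<^sup>2 * (eta k)^6 * (theta k 1)\<^sup>2 / (12 * (gamma k 1)^6 * (theta k 1 + theta k 2))
           + L3\<^sup>2 * (eta k)^6 * (theta k 2)\<^sup>2 / (12 * (gamma k 2)^6 * (theta k 1 + theta k 2))
           + L3\<^sup>2 * (eta k)^6 / (12 * (theta k 1 + theta k 2))
           + 2 * ((theta k 1)\<^sup>2 + (theta k 2)\<^sup>2) * \<sigma>\<^sup>2"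
proof -
  interpret P: prob_space M by (rule prob)
  obtain xk xkm1 mk where st: "sfom_state G x0 eta 2 gamma theta xis k = (xk, xkm1, mk)"
    by (cases "sfom_state G x0 eta 2 gamma theta xis k") auto
  have st': "sfom_state G x0 eta 2 gamma theta (xis(Suc k := s)) k = (xk, xkm1, mk)" for s
    by (subst state_indep) (auto simp: st)
  define S where "S = theta k 1 + theta k 2"
  define \<eta> where "\<eta> = eta k"
  define y where "y = xk - (\<eta> / norm mk) *\<^sub>R mk"
  define c where "c = (\<lambda>t. (1 - gamma k t) / gamma k t)"
  define z where "z = (\<lambda>t. y + c t *\<^sub>R (y - xk))"
  have s12: "{1..2::nat} = {1,2}" "{Suc 0..2} = {Suc 0, 2}" by auto
  have stS: "sfom_state G x0 eta 2 gamma theta (xis(Suc k := s)) (Suc k)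
      = (y, xk, (1 - S) *\<^sub>R mk + (theta k 1 *\<^sub>R G (z 1) s + theta k 2 *\<^sub>R G (z 2) s))" for s
    by (simp add: st' s12 y_def z_def c_def S_def \<eta>_def Let_def)
  have mk_eq: "sfom_m G x0 eta 2 gamma theta xis k = mk" and xk_eq: "sfom_x G x0 eta 2 gamma theta xis k = xk"
    using st by (simp_all add: sfom_m_def sfom_x_def)
  have m1_eq: "sfom_m G x0 eta 2 gamma theta (xis(Suc k := s)) (Suc k) = (1 - S) *\<^sub>R mk + (theta k 1 *\<^sub>R G (z 1) s + theta k 2 *\<^sub>R G (z 2) s)"
    and x1_eq: "sfom_x G x0 eta 2 gamma theta (xis(Suc k := s)) (Suc k) = y" for s
    using stS[of s] by (simp_all add: sfom_m_def sfom_x_def)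
  have mk0: "mk \<noteq> 0" using m_nonzero mk_eq by simp
  have eta0: "\<eta> > 0" using eta_pos \<eta>_def by simp
  have g1: "0 < gamma k 1" "gamma k 1 < 1" and g2: "0 < gamma k 2" "gamma k 2 < 1"
    using gamma_range[of 1 k] gamma_range[of 2 k] by auto
  have S0: "0 < S" "S < 1" using par3[of k] S_def by auto
  define B where "B = (1 - S) *\<^sub>R gradf xk + theta k 1 *\<^sub>R gradf (z 1) + theta k 2 *\<^sub>R gradf (z 2) - gradf y"
  define A where "A = (1 - S) *\<^sub>R (mk - gradf xk) + B"
  define e where "e = (\<lambda>t s. G (z t) s - gradf (z t))"
  have V: "(1 - S) *\<^sub>R mk + (theta k 1 *\<^sub>R G (z 1) s + theta k 2 *\<^sub>R G (z 2) s) - gradf y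
      = A + (theta k 1 *\<^sub>R e 1 s + theta k 2 *\<^sub>R e 2 s)" for s
    by (simp add: A_def B_def e_def algebra_simps)
  define K where "K = L3 * \<eta>^3 / 6 * (1 + \<bar>theta k 1\<bar> / gamma k 1 ^ 3 + \<bar>theta k 2\<bar> / gamma k 2 ^ 3)"
  have Bbound: "norm B \<le> K"
  proof -
    define u where "u = (1/\<eta>) *\<^sub>R (y - xk)"
    have yx: "y - xk = - (\<eta> / norm mk) *\<^sub>R mk" by (simp add: y_def)
    have nyx: "norm (y - xk) = \<eta>" using mk0 eta0 by (simp add: yx)
    have nu: "norm u = 1" using eta0 by (simp add: u_def nyx)
    have yxu: "y - xk = \<eta> *\<^sub>R u" using eta0 by (simp add: u_def)
    have xk_u: "xk = y + (-\<eta>) *\<^sub>R u" using yxu by (simp add: algebra_simps)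
    have z_u: "z t = y + (c t * \<eta>) *\<^sub>R u" for t by (simp add: z_def yxu)
    show ?thesis
    proof (cases "B = 0")
      case True
      have "0 \<le> K" unfolding K_def using B_L3 eta0 g1 g2
        by (intro mult_nonneg_nonneg add_nonneg_nonneg divide_nonneg_nonneg) auto
      then show ?thesis using True by simp
    next
      case False
      define v where "v = (1 / norm B) *\<^sub>R B"
      have nv: "norm v = 1" using False by (simp add: v_def)
      have Bv: "B \<bullet> v = norm B" using False
        by (simp add: v_def inner_scaleR_right power2_norm_eq_inner[symmetric] power2_eq_square)
      define \<phi> where "\<phi> = (\<lambda>t. gradf (y + t *\<^sub>R u) \<bullet> v)"
      define \<phi>1 where "\<phi>1 = (\<lambda>t. D2f (y + t *\<^sub>R u) v u)"
      define \<phi>2 where "\<phi>2 = (\<lambda>t. D3f (y + t *\<^sub>R u) v u u)"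
      have d0: "(\<phi> has_real_derivative \<phi>1 t) (at t)" for t
        unfolding \<phi>_def \<phi>1_def by (rule phi_deriv[of "\<lambda>x. gradf x \<bullet> v" "\<lambda>x. D2f x v"]) (rule B_D2)
      have d1: "(\<phi>1 has_real_derivative \<phi>2 t) (at t)" for t
        unfolding \<phi>2_def \<phi>1_def by (rule phi_deriv[of "\<lambda>x. D2f x v u" "\<lambda>x. D3f x v u"]) (rule B_D3)
      have lip: "\<bar>\<phi>2 t - \<phi>2 0\<bar> \<le> L3 * \<bar>t\<bar>" for t
      proof -
        have a: "\<phi>2 t - \<phi>2 0 \<le> L3 * norm ((y + t *\<^sub>R u) - y)"
          unfolding \<phi>2_def scaleR_zero_left add_0_right by (rule B_lip) (use nv nu in auto)
        have b: "\<phi>2 0 - \<phi>2 t \<le> L3 * norm (y - (y + t *\<^sub>R u))"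
          unfolding \<phi>2_def scaleR_zero_left add_0_right by (rule B_lip) (use nv nu in auto)
        show ?thesis using a b nu by (simp add: abs_le_iff)
      qed
      define R where "R = (\<lambda>t. \<phi> t - \<phi> 0 - t * \<phi>1 0 - t^2/2 * \<phi>2 0)"
      have Rb: "\<bar>R t\<bar> \<le> L3 * \<bar>t\<bar>^3/6" for t
        unfolding R_def by (rule taylor2[OF d0 d1 lip])
      have Bphi: "B \<bullet> v = (1 - S) * \<phi> (-\<eta>) + theta k 1 * \<phi> (c 1 * \<eta>) + theta k 2 * \<phi> (c 2 * \<eta>) - \<phi> 0"
      proof -
        have "y - \<eta> *\<^sub>R u = xk" using xk_u by (simp add: algebra_simps)
        then show ?thesis
          unfolding B_def \<phi>_def by (simp add: inner_diff_left inner_add_left flip: xk_u z_u)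
      qed
      have c1: "c 1 = 1 / gamma k 1 - 1" and c2: "c 2 = 1 / gamma k 2 - 1"
        using g1 g2 by (simp_all add: c_def field_simps)
      have E1: "-(1 - S) + theta k 1 * c 1 + theta k 2 * c 2 = 0"
      proof -
        have "theta k 1 * (1 / gamma k 1 - 1) = theta k 1 / gamma k 1 - theta k 1"
          "theta k 2 * (1 / gamma k 2 - 1) = theta k 2 / gamma k 2 - theta k 2"
          by (simp_all add: right_diff_distrib)
        then show ?thesis unfolding c1 c2 S_def using par1[of k] by linarith
      qed
      have E2: "(1 - S) + theta k 1 * (c 1)^2 + theta k 2 * (c 2)^2 = 0"
      proof -
        have "theta k 1 * (c 1)^2 = theta k 1 / (gamma k 1)^2 - 2 * (theta k 1 / gamma k 1) + theta k 1"
          unfolding c1 using g1 by (simp add: field_simps power2_eq_square)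
        moreover have "theta k 2 * (c 2)^2 = theta k 2 / (gamma k 2)^2 - 2 * (theta k 2 / gamma k 2) + theta k 2"
          unfolding c2 using g2 by (simp add: field_simps power2_eq_square)
        ultimately show ?thesis using par1[of k] par2[of k] unfolding S_def by linarith
      qed
      have BR: "B \<bullet> v = (1 - S) * R (-\<eta>) + theta k 1 * R (c 1 * \<eta>) + theta k 2 * R (c 2 * \<eta>)"
      proof -
        have "B \<bullet> v - ((1 - S) * R (-\<eta>) + theta k 1 * R (c 1 * \<eta>) + theta k 2 * R (c 2 * \<eta>))
           = \<phi> 0 * ((1 - S) + theta k 1 + theta k 2 - 1) + \<eta> * \<phi>1 0 * (-(1 - S) + theta k 1 * c 1 + theta k 2 * c 2)
             + \<eta>^2/2 * \<phi>2 0 * ((1 - S) + theta k 1 * (c 1)^2 + theta k 2 * (c 2)^2)"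
          unfolding Bphi R_def by (simp add: field_simps power2_eq_square)
        also have "\<dots> = 0" using E1 E2 by (simp add: S_def)
        finally show ?thesis by simp
      qed
      have c1b: "0 \<le> c 1 * \<eta>" "c 1 * \<eta> \<le> \<eta> / gamma k 1"
        using g1 eta0 by (auto simp: c_def field_simps)
      have c2b: "0 \<le> c 2 * \<eta>" "c 2 * \<eta> \<le> \<eta> / gamma k 2"
        using g2 eta0 by (auto simp: c_def field_simps)
      have t0: "\<bar>(1 - S) * R (-\<eta>)\<bar> \<le> L3 * \<eta>^3/6"
      proof -
        have "\<bar>(1 - S) * R (-\<eta>)\<bar> = (1 - S) * \<bar>R (-\<eta>)\<bar>" using S0 by (simp add: abs_mult)
        also have "\<dots> \<le> 1 * (L3 * \<eta>^3/6)"
          using Rb[of "-\<eta>"] S0 eta0 by (intro mult_mono) auto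
        finally show ?thesis by simp
      qed
      have tt: "\<bar>theta k t * R (c t * \<eta>)\<bar> \<le> L3 * \<eta>^3/6 * (\<bar>theta k t\<bar> / gamma k t ^ 3)"
        if "0 \<le> c t * \<eta>" "c t * \<eta> \<le> \<eta> / gamma k t" "0 < gamma k t" for t
      proof -
        have "\<bar>R (c t * \<eta>)\<bar> \<le> L3 * (c t * \<eta>)^3/6" using Rb[of "c t * \<eta>"] that by simp
        also have "\<dots> \<le> L3 * (\<eta> / gamma k t)^3/6"
          using that B_L3 by (intro divide_right_mono mult_left_mono power_mono) auto
        finally have "\<bar>R (c t * \<eta>)\<bar> \<le> L3 * (\<eta> / gamma k t)^3/6" .
        then have "\<bar>theta k t\<bar> * \<bar>R (c t * \<eta>)\<bar> \<le> \<bar>theta k t\<bar> * (L3 * (\<eta> / gamma k t)^3/6)"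
          by (intro mult_left_mono) auto
        then show ?thesis by (simp add: abs_mult power_divide field_simps)
      qed
      have "norm B \<le> \<bar>(1 - S) * R (-\<eta>)\<bar> + \<bar>theta k 1 * R (c 1 * \<eta>)\<bar> + \<bar>theta k 2 * R (c 2 * \<eta>)\<bar>"
        using Bv BR by linarith
      also have "\<dots> \<le> L3 * \<eta>^3/6 + L3 * \<eta>^3/6 * (\<bar>theta k 1\<bar> / gamma k 1 ^ 3) + L3 * \<eta>^3/6 * (\<bar>theta k 2\<bar> / gamma k 2 ^ 3)"
        using t0 tt[OF c1b g1(1)] tt[OF c2b g2(1)] by linarith
      also have "\<dots> = K" by (simp add: K_def algebra_simps)
      finally show ?thesis .
    qed
  qed
  define q where "q = (\<lambda>t s. (norm (e t s))\<^sup>2)"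
  define N where "N = (\<lambda>s. theta k 1 *\<^sub>R e 1 s + theta k 2 *\<^sub>R e 2 s)"
  define F where "F = (\<lambda>s. ((norm A)\<^sup>2 - 2 * theta k 1 * (A \<bullet> gradf (z 1)) - 2 * theta k 2 * (A \<bullet> gradf (z 2)))
      + 2 * theta k 1 * (A \<bullet> G (z 1) s) + 2 * theta k 2 * (A \<bullet> G (z 2) s)
      + 2 * (theta k 1)\<^sup>2 * q 1 s + 2 * (theta k 2)\<^sup>2 * q 2 s)"
  have Gi: "integrable M (\<lambda>s. G x s)" and Gint: "(\<integral>s. G x s \<partial>M) = gradf x" for x
    using A_unbiased[of x] by auto
  have qi: "integrable M (q t)" and qint: "(\<integral>s. q t s \<partial>M) \<le> \<sigma>\<^sup>2" for t
    using A_var[of "z t"] by (simp_all add: q_def e_def)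
  have pw: "(norm (A + N s))\<^sup>2 \<le> F s" for s
  proof -
    have par: "(norm (a + b))\<^sup>2 + (norm (a - b))\<^sup>2 = 2 * (norm a)\<^sup>2 + 2 * (norm b)\<^sup>2" for a b :: 'a
      by (simp add: power2_norm_eq_inner inner_add inner_diff inner_commute)
    have "(norm (N s))\<^sup>2 \<le> 2 * (norm (theta k 1 *\<^sub>R e 1 s))\<^sup>2 + 2 * (norm (theta k 2 *\<^sub>R e 2 s))\<^sup>2"
      using par[of "theta k 1 *\<^sub>R e 1 s" "theta k 2 *\<^sub>R e 2 s"]
        zero_le_power2[of "norm (theta k 1 *\<^sub>R e 1 s - theta k 2 *\<^sub>R e 2 s)"] unfolding N_def by linarith
    also have "\<dots> = 2 * (theta k 1)\<^sup>2 * q 1 s + 2 * (theta k 2)\<^sup>2 * q 2 s"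
      by (simp add: q_def power_mult_distrib)
    finally have n2: "(norm (N s))\<^sup>2 \<le> 2 * (theta k 1)\<^sup>2 * q 1 s + 2 * (theta k 2)\<^sup>2 * q 2 s" .
    have "(norm (A + N s))\<^sup>2 = (norm A)\<^sup>2 + 2 * (A \<bullet> N s) + (norm (N s))\<^sup>2"
      by (simp add: power2_norm_eq_inner inner_add inner_commute)
    moreover have "A \<bullet> N s = theta k 1 * (A \<bullet> G (z 1) s) - theta k 1 * (A \<bullet> gradf (z 1))
        + theta k 2 * (A \<bullet> G (z 2) s) - theta k 2 * (A \<bullet> gradf (z 2))"
      by (simp add: N_def e_def inner_add_right inner_diff_right algebra_simps)
    ultimately show ?thesis using n2 unfolding F_def by simp
  qed
  have i1: "integrable M (\<lambda>s. 2 * theta k t * (A \<bullet> G (z t) s))" for t using Gi by auto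
  have i2: "integrable M (\<lambda>s. 2 * (theta k t)\<^sup>2 * q t s)" for t using qi by auto
  have Fi: "integrable M F"
    unfolding F_def using i1[of 1] i1[of 2] i2[of 1] i2[of 2] by simp
  have FintEq: "(\<integral>s. F s \<partial>M) = (norm A)\<^sup>2 + 2 * (theta k 1)\<^sup>2 * (\<integral>s. q 1 s \<partial>M) + 2 * (theta k 2)\<^sup>2 * (\<integral>s. q 2 s \<partial>M)"
  proof -
    have ic: "(\<integral>s. c0 \<partial>M) = c0" for c0 :: real using P.prob_space by simp
    have "(\<integral>s. F s \<partial>M) = ((norm A)\<^sup>2 - 2 * theta k 1 * (A \<bullet> gradf (z 1)) - 2 * theta k 2 * (A \<bullet> gradf (z 2)))
      + (\<integral>s. 2 * theta k 1 * (A \<bullet> G (z 1) s) \<partial>M) + (\<integral>s. 2 * theta k 2 * (A \<bullet> G (z 2) s) \<partial>M)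
      + (\<integral>s. 2 * (theta k 1)\<^sup>2 * q 1 s \<partial>M) + (\<integral>s. 2 * (theta k 2)\<^sup>2 * q 2 s \<partial>M)"
      unfolding F_def using i1[of 1] i1[of 2] i2[of 1] i2[of 2] ic by (simp add: P.prob_space)
    also have "\<dots> = (norm A)\<^sup>2 + 2 * (theta k 1)\<^sup>2 * (\<integral>s. q 1 s \<partial>M) + 2 * (theta k 2)\<^sup>2 * (\<integral>s. q 2 s \<partial>M)"
      using Gi by (simp add: Gint)
    finally show ?thesis .
  qed
  have step1: "(\<integral>s. (norm (A + N s))\<^sup>2 \<partial>M) \<le> (norm A)\<^sup>2 + 2 * ((theta k 1)\<^sup>2 + (theta k 2)\<^sup>2) * \<sigma>\<^sup>2"
  proof -
    have "(\<integral>s. (norm (A + N s))\<^sup>2 \<partial>M) \<le> (\<integral>s. F s \<partial>M)"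
      by (rule integral_mono'[OF Fi pw]) (use pw in \<open>rule order.trans[rotated]\<close>, simp)
    also have "\<dots> \<le> (norm A)\<^sup>2 + 2 * (theta k 1)\<^sup>2 * \<sigma>\<^sup>2 + 2 * (theta k 2)\<^sup>2 * \<sigma>\<^sup>2"
      unfolding FintEq using qint[of 1] qint[of 2]
      by (intro add_mono mult_left_mono) auto
    finally show ?thesis by (simp add: algebra_simps)
  qed
  have step2: "(norm A)\<^sup>2 \<le> (1 - S) * (norm (mk - gradf xk))\<^sup>2 + (norm B)\<^sup>2 / S"
  proof -
    define w where "w = mk - gradf xk"
    have "(1 - S) * (norm w)\<^sup>2 + (norm B)\<^sup>2 / S - (norm ((1 - S) *\<^sub>R w + B))\<^sup>2
        = (1 - S) / S * (norm (S *\<^sub>R w - B))\<^sup>2"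
    proof -
      have n1: "(norm ((1 - S) *\<^sub>R w + B))\<^sup>2 = (1 - S)^2 * (w \<bullet> w) + 2 * (1 - S) * (w \<bullet> B) + B \<bullet> B"
        unfolding power2_norm_eq_inner inner_add_left inner_add_right inner_diff_left inner_diff_right inner_scaleR_left inner_scaleR_right
        by (simp add: inner_commute[of B w] power2_eq_square algebra_simps)
      have n2: "(norm (S *\<^sub>R w - B))\<^sup>2 = S^2 * (w \<bullet> w) - 2 * S * (w \<bullet> B) + B \<bullet> B"
        unfolding power2_norm_eq_inner inner_add_left inner_add_right inner_diff_left inner_diff_right inner_scaleR_left inner_scaleR_right
        by (simp add: inner_commute[of B w] power2_eq_square algebra_simps)
      have n3: "(norm w)\<^sup>2 = w \<bullet> w" "(norm B)\<^sup>2 = B \<bullet> B" by (simp_all add: power2_norm_eq_inner)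
      show ?thesis unfolding n1 n2 n3 using S0 by (simp add: field_simps power2_eq_square)
    qed
    moreover have "0 \<le> (1 - S) / S * (norm (S *\<^sub>R w - B))\<^sup>2" using S0 by simp
    ultimately show ?thesis unfolding A_def w_def by linarith
  qed
  have step3: "(norm B)\<^sup>2 / S \<le> L3\<^sup>2 * \<eta>^6 * (theta k 1)\<^sup>2 / (12 * (gamma k 1)^6 * S)
           + L3\<^sup>2 * \<eta>^6 * (theta k 2)\<^sup>2 / (12 * (gamma k 2)^6 * S)
           + L3\<^sup>2 * \<eta>^6 / (12 * S)"
  proof -
    have "(norm B)\<^sup>2 \<le> K\<^sup>2" using Bbound by (intro power_mono) auto
    also have "\<dots> \<le> 3 * ((L3 * \<eta>^3 / 6)\<^sup>2 + (L3 * \<eta>^3 / 6 * (\<bar>theta k 1\<bar> / gamma k 1 ^ 3))\<^sup>2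
        + (L3 * \<eta>^3 / 6 * (\<bar>theta k 2\<bar> / gamma k 2 ^ 3))\<^sup>2)"
    proof -
      have Ke: "K = L3 * \<eta>^3 / 6 + L3 * \<eta>^3 / 6 * (\<bar>theta k 1\<bar> / gamma k 1 ^ 3) + L3 * \<eta>^3 / 6 * (\<bar>theta k 2\<bar> / gamma k 2 ^ 3)"
        unfolding K_def by (simp only: distrib_left mult_1_right)
      show ?thesis unfolding Ke by (rule sq3)
    qed
    also have "\<dots> = L3\<^sup>2 * \<eta>^6 * (theta k 1)\<^sup>2 / (12 * (gamma k 1)^6)
           + L3\<^sup>2 * \<eta>^6 * (theta k 2)\<^sup>2 / (12 * (gamma k 2)^6)
           + L3\<^sup>2 * \<eta>^6 / 12"
      unfolding sqh[OF g1(1)] sqh[OF g2(1)] by (simp add: power_mult_distrib field_simps flip: power_mult)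
    finally have "(norm B)\<^sup>2 \<le> L3\<^sup>2 * \<eta>^6 * (theta k 1)\<^sup>2 / (12 * (gamma k 1)^6)
           + L3\<^sup>2 * \<eta>^6 * (theta k 2)\<^sup>2 / (12 * (gamma k 2)^6)
           + L3\<^sup>2 * \<eta>^6 / 12" .
    then have "(norm B)\<^sup>2 / S \<le> (L3\<^sup>2 * \<eta>^6 * (theta k 1)\<^sup>2 / (12 * (gamma k 1)^6)
           + L3\<^sup>2 * \<eta>^6 * (theta k 2)\<^sup>2 / (12 * (gamma k 2)^6)
           + L3\<^sup>2 * \<eta>^6 / 12) / S"
      using S0 by (intro divide_right_mono) auto
    also have "\<dots> = L3\<^sup>2 * \<eta>^6 * (theta k 1)\<^sup>2 / (12 * (gamma k 1)^6 * S)
           + L3\<^sup>2 * \<eta>^6 * (theta k 2)\<^sup>2 / (12 * (gamma k 2)^6 * S)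
           + L3\<^sup>2 * \<eta>^6 / (12 * S)"
      by (simp add: add_divide_distrib)
    finally show ?thesis .
  qed
  have LHS: "(\<integral>s. (norm (sfom_m G x0 eta 2 gamma theta (xis(Suc k := s)) (Suc k)
                     - gradf (sfom_x G x0 eta 2 gamma theta (xis(Suc k := s)) (Suc k))))\<^sup>2 \<partial>M)
       = (\<integral>s. (norm (A + N s))\<^sup>2 \<partial>M)"
    unfolding m1_eq x1_eq V N_def ..
  show ?thesis unfolding LHS mk_eq xk_eq using step1 step2 step3
    by (simp add: S_def \<eta>_def algebra_simps)
qed

end
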